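(* Consider the control-affine system $\dot{x} = f(x) + g(x)u$ with $x \in \mathcal{X} \subseteq \mathbb{R}^n$, $u \in \mathcal{U} \subseteq \mathbb{R}^m$, where $f,g$ are continuously differentiable and $\mathcal{U}$ is a convex polytope. Let $h:\mathcal{X}\to\mathbb{R}$ be continuously differentiable, $\mathcal{C}_S=\{x: h(x)\ge 0\}$, let $k_b$ be a backup controller with backup set $\mathcal{C}_B=\{x: h_b(x)\ge0\}\subseteq\mathcal{C}_S$ (see context), let $k_e:\mathcal{X}\to\mathcal{U}$ be continuously differentiable, let $\eta:\mathcal{X}\to[0,1]$ be continuously differentiable with $\eta(x)=1$ for all $x\in\mathcal{C}_B$, and let $k_s(x) = (1-\eta(x))k_e(x)+\eta(x)k_b(x)$. Let $\phi_s(\tau,x)$ denote the flow of $\dot x = f_s(x) := f(x)+g(x)k_s(x)$, i.e. $\frac{\partial}{\partial\tau}\phi_s(\tau,x) = f_s(\phi_s(\tau,x))$, $\phi_s(0,x)=x$. Fix $T>0$ and define $$\mathcal{C}_I^\star = \{x\in\mathcal{X} : h(\phi_s(\tau,x))\ge 0 \ \forall \tau\in[0,T],\ h_b(\phi_s(T,x))\ge 0\}.$$ Then $\mathcal{C}_I^\star$ is controlled invariant, and $k_s$ renders $\mathcal{C}_I^\star$ forward invariant along $\dot x = f_s(x)$: for every $x\in\mathcal{C}_I^\star$, $\phi_s(\tau,x)\in\mathcal{C}_I^\star\subseteq\mathcal{C}_S$ for all $\tau\ge 0$.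
   Context: A set is forward invariant along a closed-loop system if solutions starting in it remain in it for all future times; a set is controlled invariant if there exists a controller $k:\mathcal{X}\to\mathcal{U}$ rendering it forward invariant for $\dot x = f(x)+g(x)k(x)$. A backup controller is a continuously differentiable $k_b:\mathcal{X}\to\mathcal{U}$ rendering $\mathcal{C}_B=\{x\in\mathcal{X}: h_b(x)\ge0\}\subseteq\mathcal{C}_S$ forward invariant, where $h_b$ is continuously differentiable with $\nabla h_b(x)\neq0$ on $\partial\mathcal{C}_B$. The flow $\phi_s(\tau,x)$ is treated as defined for all $\tau\ge0$ (the paper asserts that continuous differentiability of $\eta$ admits global solutions). *)

theory Defs
  imports "HOL-Analysis.Analysis"
begin

definition C1_on :: "'a::real_normed_vector set \<Rightarrow> ('a \<Rightarrow> 'b::real_normed_vector) \<Rightarrow> bool" where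
  "C1_on X f \<longleftrightarrow> (\<exists>f'. (\<forall>x\<in>X. (f has_derivative blinfun_apply (f' x)) (at x)) \<and> continuous_on X f')"

definition forward_invariant :: "('a::real_normed_vector \<Rightarrow> 'a) \<Rightarrow> 'a set \<Rightarrow> 'a set \<Rightarrow> bool" where
  "forward_invariant F X S \<longleftrightarrow>
     (\<forall>x0\<in>S. \<forall>t\<ge>0. \<forall>\<gamma>. \<gamma> 0 = x0 \<and>
        (\<forall>s\<in>{0..t}. \<gamma> s \<in> X \<and> (\<gamma> has_vector_derivative F (\<gamma> s)) (at s within {0..t}))
        \<longrightarrow> (\<forall>s\<in>{0..t}. \<gamma> s \<in> S))"

definition controlled_invariant ::
  "(real^'n \<Rightarrow> real^'n) \<Rightarrow> (real^'n \<Rightarrow> real^'m^'n) \<Rightarrow> (real^'m) set \<Rightarrow> (real^'n) set \<Rightarrow> (real^'n) set \<Rightarrow> bool" where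
  "controlled_invariant f g U X S \<longleftrightarrow>
     (\<exists>k. (\<forall>x\<in>X. k x \<in> U) \<and> forward_invariant (\<lambda>x. f x + g x *v k x) X S)"

definition backup_controller ::
  "(real^'n \<Rightarrow> real^'n) \<Rightarrow> (real^'n \<Rightarrow> real^'m^'n) \<Rightarrow> (real^'m) set \<Rightarrow> (real^'n) set \<Rightarrow> (real^'n) set \<Rightarrow> (real^'n \<Rightarrow> real^'m) \<Rightarrow> bool" where
  "backup_controller f g U X CB kb \<longleftrightarrow>
     C1_on X kb \<and> (\<forall>x\<in>X. kb x \<in> U) \<and> forward_invariant (\<lambda>x. f x + g x *v kb x) X CB"

end

theory Submission
  imports Defs
begin


definition loclip :: "('a::real_normed_vector \<Rightarrow> 'b::real_normed_vector) \<Rightarrow> 'a set \<Rightarrow> bool" where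
  "loclip F X \<longleftrightarrow> continuous_on X F \<and> (\<forall>z\<in>X. \<exists>r>0. \<exists>L\<ge>0. cball z r \<subseteq> X \<and>
     (\<forall>x\<in>cball z r. \<forall>y\<in>cball z r. norm (F x - F y) \<le> L * norm (x - y)))"

lemma C1_loclip:
  fixes F :: "'a::euclidean_space \<Rightarrow> 'b::real_normed_vector"
  assumes "open X" "C1_on X F"
  shows "loclip F X"
proof -
  obtain F' where der: "\<forall>x\<in>X. (F has_derivative blinfun_apply (F' x)) (at x)" and cF': "continuous_on X F'"
    using assms(2) unfolding C1_on_def by blast
  have "continuous_on X F"
    using der by (meson continuous_at_imp_continuous_on has_derivative_continuous)
  moreover have "\<exists>r>0. \<exists>L\<ge>0. cball z r \<subseteq> X \<and>
     (\<forall>x\<in>cball z r. \<forall>y\<in>cball z r. norm (F x - F y) \<le> L * norm (x - y))" if z: "z \<in> X" for z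
  proof -
    obtain r where r: "r > 0" "cball z r \<subseteq> X" using assms(1) z open_contains_cball by blast
    have "compact (F' ` cball z r)"
      using cF' r(2) by (meson compact_cball compact_continuous_image continuous_on_subset)
    then obtain B where B: "\<forall>x\<in>cball z r. norm (F' x) \<le> B"
      by (meson bounded_iff compact_imp_bounded imageI)
    have "norm (F x - F y) \<le> max B 0 * norm (x - y)" if "x \<in> cball z r" "y \<in> cball z r" for x y
    proof (rule differentiable_bound[OF convex_cball _ _ that])
      fix w assume w: "w \<in> cball z r"
      show "(F has_derivative blinfun_apply (F' w)) (at w within cball z r)"
        using der w r(2) has_derivative_at_withinI by blast
      show "onorm (blinfun_apply (F' w)) \<le> max B 0"
      proof -
        have "norm (F' w) \<le> B" using B w by blast
        then show ?thesis by (simp add: norm_blinfun.rep_eq[symmetric])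
      qed
    qed
    moreover have "max B 0 \<ge> 0" by simp
    ultimately show ?thesis using r by blast
  qed
  ultimately show ?thesis unfolding loclip_def by blast
qed

lemma loclip_const: "open X \<Longrightarrow> loclip (\<lambda>x. c) X"
  unfolding loclip_def
proof (intro conjI ballI)
  fix z assume "open X" "z \<in> X"
  then obtain r where "r > 0" "cball z r \<subseteq> X" using open_contains_cball by blast
  then show "\<exists>r>0. \<exists>L\<ge>0. cball z r \<subseteq> X \<and> (\<forall>x\<in>cball z r. \<forall>y\<in>cball z r. norm (c - c) \<le> L * norm (x - y))"
    by (intro exI[of _ r] exI[of _ 0]) auto
qed auto

lemma loclip_bilin:
  fixes prod :: "'a::real_normed_vector \<Rightarrow> 'b::real_normed_vector \<Rightarrow> 'c::real_normed_vector"
    and F :: "'d::euclidean_space \<Rightarrow> 'a" and G :: "'d \<Rightarrow> 'b"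
  assumes bb: "bounded_bilinear prod" and F: "loclip F X" and G: "loclip G X"
  shows "loclip (\<lambda>x. prod (F x) (G x)) X"
proof -
  have cF: "continuous_on X F" and cG: "continuous_on X G" using F G loclip_def by auto
  have "continuous_on X (\<lambda>x. prod (F x) (G x))"
    using bounded_bilinear.continuous_on[OF bb cF cG] .
  moreover have "\<exists>r>0. \<exists>L\<ge>0. cball z r \<subseteq> X \<and>
     (\<forall>x\<in>cball z r. \<forall>y\<in>cball z r. norm (prod (F x) (G x) - prod (F y) (G y)) \<le> L * norm (x - y))"
    if z: "z \<in> X" for z
  proof -
    obtain r1 L1 where r1: "r1 > 0" "L1 \<ge> 0" "cball z r1 \<subseteq> X"
      "\<forall>x\<in>cball z r1. \<forall>y\<in>cball z r1. norm (F x - F y) \<le> L1 * norm (x - y)"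
      using F z unfolding loclip_def by blast
    obtain r2 L2 where r2: "r2 > 0" "L2 \<ge> 0" "cball z r2 \<subseteq> X"
      "\<forall>x\<in>cball z r2. \<forall>y\<in>cball z r2. norm (G x - G y) \<le> L2 * norm (x - y)"
      using G z unfolding loclip_def by blast
    define r where "r = min r1 r2"
    have rs: "r > 0" "cball z r \<subseteq> cball z r1" "cball z r \<subseteq> cball z r2" "cball z r \<subseteq> X"
      using r1 r2 by (auto simp: r_def)
    have "compact (F ` cball z r)"
      by (intro compact_continuous_image continuous_on_subset[OF cF rs(4)] compact_cball)
    then obtain BF where BF: "\<forall>x\<in>cball z r. norm (F x) \<le> BF"
      by (meson bounded_iff compact_imp_bounded imageI)
    have "compact (G ` cball z r)"
      by (intro compact_continuous_image continuous_on_subset[OF cG rs(4)] compact_cball)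
    then obtain BG where BG: "\<forall>x\<in>cball z r. norm (G x) \<le> BG"
      by (meson bounded_iff compact_imp_bounded imageI)
    obtain K where K: "K > 0" "\<And>a b. norm (prod a b) \<le> norm a * norm b * K"
      using bounded_bilinear.pos_bounded[OF bb] by blast
    have BF0: "BF \<ge> 0" using BF[rule_format, of z] rs(1) by (meson centre_in_cball less_imp_le norm_ge_zero order_trans)
    have BG0: "BG \<ge> 0" using BG[rule_format, of z] rs(1) by (meson centre_in_cball less_imp_le norm_ge_zero order_trans)
    have "norm (prod (F x) (G x) - prod (F y) (G y)) \<le> (K * (L1 * BG + BF * L2)) * norm (x - y)"
      if x: "x \<in> cball z r" and y: "y \<in> cball z r" for x y
    proof -
      have eq: "prod (F x) (G x) - prod (F y) (G y) = prod (F x - F y) (G x) + prod (F y) (G x - G y)"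
        by (simp add: bounded_bilinear.diff_left[OF bb] bounded_bilinear.diff_right[OF bb])
      have a: "norm (prod (F x - F y) (G x)) \<le> (L1 * norm (x - y)) * BG * K"
        using K(2)[of "F x - F y" "G x"] K(1) r1(4) rs x y BF BG
        by (smt (verit, best) mult_mono mult_right_mono norm_ge_zero subsetD)
      have b: "norm (prod (F y) (G x - G y)) \<le> BF * (L2 * norm (x - y)) * K"
        using K(2)[of "F y" "G x - G y"] K(1) r2(4) rs x y BF BG
        by (smt (verit, best) mult_mono mult_right_mono norm_ge_zero subsetD)
      have "norm (prod (F x) (G x) - prod (F y) (G y)) \<le> norm (prod (F x - F y) (G x)) + norm (prod (F y) (G x - G y))"
        unfolding eq by (rule norm_triangle_ineq)
      also have "\<dots> \<le> (L1 * norm (x - y)) * BG * K + BF * (L2 * norm (x - y)) * K"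
        using a b by linarith
      also have "\<dots> = (K * (L1 * BG + BF * L2)) * norm (x - y)" by (simp add: algebra_simps)
      finally show ?thesis .
    qed
    moreover have "K * (L1 * BG + BF * L2) \<ge> 0" using K r1 r2 BF0 BG0 by simp
    ultimately show ?thesis using rs by blast
  qed
  ultimately show ?thesis unfolding loclip_def by blast
qed

lemma loclip_add:
  assumes F: "loclip F X" and G: "loclip G X"
  shows "loclip (\<lambda>x. F x + G x) X"
proof -
  have cF: "continuous_on X F" and cG: "continuous_on X G" using F G loclip_def by auto
  have "\<exists>r>0. \<exists>L\<ge>0. cball z r \<subseteq> X \<and>
     (\<forall>x\<in>cball z r. \<forall>y\<in>cball z r. norm ((F x + G x) - (F y + G y)) \<le> L * norm (x - y))"
    if z: "z \<in> X" for z
  proof -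
    obtain r1 L1 where r1: "r1 > 0" "L1 \<ge> 0" "cball z r1 \<subseteq> X"
      "\<forall>x\<in>cball z r1. \<forall>y\<in>cball z r1. norm (F x - F y) \<le> L1 * norm (x - y)"
      using F z unfolding loclip_def by blast
    obtain r2 L2 where r2: "r2 > 0" "L2 \<ge> 0" "cball z r2 \<subseteq> X"
      "\<forall>x\<in>cball z r2. \<forall>y\<in>cball z r2. norm (G x - G y) \<le> L2 * norm (x - y)"
      using G z unfolding loclip_def by blast
    define r where "r = min r1 r2"
    have rs: "r > 0" "cball z r \<subseteq> cball z r1" "cball z r \<subseteq> cball z r2" "cball z r \<subseteq> X"
      using r1 r2 by (auto simp: r_def)
    have "norm ((F x + G x) - (F y + G y)) \<le> (L1 + L2) * norm (x - y)"
      if x: "x \<in> cball z r" and y: "y \<in> cball z r" for x y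
    proof -
      have "norm ((F x + G x) - (F y + G y)) \<le> norm (F x - F y) + norm (G x - G y)"
        by (metis add_diff_add norm_triangle_ineq)
      also have "\<dots> \<le> L1 * norm (x - y) + L2 * norm (x - y)"
        using r1(4) r2(4) rs x y by (meson add_mono subsetD)
      finally show ?thesis by (simp add: algebra_simps)
    qed
    moreover have "L1 + L2 \<ge> 0" using r1 r2 by simp
    ultimately show ?thesis using rs by blast
  qed
  then show ?thesis using continuous_on_add[OF cF cG] unfolding loclip_def by blast
qed

lemma bb_mv: "bounded_bilinear ((*v) :: real^'m^'n \<Rightarrow> real^'m \<Rightarrow> real^'n)"
  unfolding bilinear_conv_bounded_bilinear[symmetric] bilinear_def
  by (auto simp: linear_iff matrix_vector_mult_add_rdistrib matrix_vector_right_distrib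
        matrix_vector_mult_scaleR vec_eq_iff matrix_vector_mult_def sum_distrib_left algebra_simps sum.distrib)



lemma cont_induct:
  fixes P :: "real \<Rightarrow> bool"
  assumes P0: "P 0"
    and cl: "\<And>s. s > 0 \<Longrightarrow> \<forall>u\<in>{0..<s}. P u \<Longrightarrow> P s"
    and ext: "\<And>s. s \<ge> 0 \<Longrightarrow> \<forall>u\<in>{0..s}. P u \<Longrightarrow> \<exists>d>0. \<forall>u\<in>{s..s+d}. P u"
  shows "\<forall>s\<ge>0. P s"
proof (rule ccontr)
  assume "\<not> (\<forall>s\<ge>0. P s)"
  then obtain b where b: "b \<ge> 0" "\<not> P b" by blast
  define S where "S = {s. s \<ge> 0 \<and> (\<forall>u\<in>{0..s}. P u)}"
  have 0: "0 \<in> S" using P0 unfolding S_def by simp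
  have bd: "s < b" if "s \<in> S" for s
  proof (rule ccontr)
    assume "\<not> s < b"
    then have "b \<in> {0..s}" using b by simp
    then show False using that b unfolding S_def by blast
  qed
  have bdd: "bdd_above S" using bd by (meson bdd_above.I less_imp_le)
  define t where "t = Sup S"
  have t0: "t \<ge> 0" unfolding t_def using 0 bdd by (rule cSup_upper)
  have below: "P u" if "0 \<le> u" "u < t" for u
  proof -
    have "S \<noteq> {}" using 0 by blast
    then have "\<exists>s\<in>S. u < s" using less_cSup_iff[of S u] bdd that unfolding t_def by blast
    then obtain s where s: "s \<in> S" "u < s" by blast
    then have "u \<in> {0..s}" using that by simp
    then show ?thesis using s unfolding S_def by blast
  qed
  have Pt: "P t"
  proof (cases "t = 0")
    case True then show ?thesis using P0 by simp
  next
    case False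
    then have "t > 0" using t0 by simp
    moreover have "\<forall>u\<in>{0..<t}. P u" using below by simp
    ultimately show ?thesis by (rule cl)
  qed
  have tS: "\<forall>u\<in>{0..t}. P u"
  proof
    fix u assume "u \<in> {0..t}"
    then show "P u" using below Pt by (cases "u = t") auto
  qed
  then obtain d where d: "d > 0" "\<forall>u\<in>{t..t+d}. P u" using ext[of t] t0 by blast
  have "\<forall>u\<in>{0..t+d}. P u"
  proof
    fix u assume u: "u \<in> {0..t+d}"
    show "P u"
    proof (cases "u \<le> t")
      case True then show ?thesis using tS u by simp
    next
      case False then show ?thesis using d u by simp
    qed
  qed
  then have "t + d \<in> S" unfolding S_def using d t0 by simp
  then have "t + d \<le> t" unfolding t_def using bdd by (rule cSup_upper)
  then show False using d by simp
qed



lemma ode_unique_local: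
  fixes F :: "'a::euclidean_space \<Rightarrow> 'a"
  assumes F: "loclip F X"
    and g1: "\<forall>s\<in>{0..t}. \<gamma>1 s \<in> X \<and> (\<gamma>1 has_vector_derivative F (\<gamma>1 s)) (at s within {0..t})"
    and g2: "\<forall>s\<in>{0..t}. \<gamma>2 s \<in> X \<and> (\<gamma>2 has_vector_derivative F (\<gamma>2 s)) (at s within {0..t})"
    and s: "0 \<le> s" "s < t" and eq: "\<gamma>1 s = \<gamma>2 s"
  shows "\<exists>d>0. \<forall>u\<in>{s..s+d}. \<gamma>1 u = \<gamma>2 u"
proof -
  define z where "z = \<gamma>1 s"
  have zX: "z \<in> X" using g1 s by (auto simp: z_def)
  obtain r L where rL: "r > 0" "L \<ge> 0" "cball z r \<subseteq> X"
      "\<forall>x\<in>cball z r. \<forall>y\<in>cball z r. norm (F x - F y) \<le> L * norm (x - y)"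
    using F zX unfolding loclip_def by blast
  have c1: "continuous_on {0..t} \<gamma>1" using g1
    unfolding continuous_on_eq_continuous_within using has_vector_derivative_continuous by blast
  have c2: "continuous_on {0..t} \<gamma>2" using g2
    unfolding continuous_on_eq_continuous_within using has_vector_derivative_continuous by blast
  have st: "s \<in> {0..t}" using s by simp
  obtain d1 where d1: "d1 > 0" "\<forall>u\<in>{0..t}. dist u s < d1 \<longrightarrow> dist (\<gamma>1 u) (\<gamma>1 s) < r"
    using c1 st rL(1) unfolding continuous_on_iff by blast
  obtain d2 where d2: "d2 > 0" "\<forall>u\<in>{0..t}. dist u s < d2 \<longrightarrow> dist (\<gamma>2 u) (\<gamma>2 s) < r"
    using c2 st rL(1) unfolding continuous_on_iff by blast
  define d where "d = min (t - s) (min (d1/2) (min (d2/2) (1 / (2 * (L + 1)))))"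
  have d0: "d > 0" using d1 d2 s rL by (simp add: d_def)
  have I_sub: "{s..s+d} \<subseteq> {0..t}" using s d0 by (auto simp: d_def)
  have in1: "\<gamma>1 u \<in> cball z r" if "u \<in> {s..s+d}" for u
  proof -
    have "dist u s < d1" using that d0 d1 by (auto simp: d_def dist_real_def)
    then show ?thesis using d1 I_sub that by (auto simp: z_def dist_commute less_imp_le)
  qed
  have in2: "\<gamma>2 u \<in> cball z r" if "u \<in> {s..s+d}" for u
  proof -
    have "dist u s < d2" using that d0 d2 by (auto simp: d_def dist_real_def)
    then show ?thesis using d2 I_sub that eq by (auto simp: z_def dist_commute less_imp_le)
  qed
  define e where "e u = \<gamma>1 u - \<gamma>2 u" for u
  have ce: "continuous_on {s..s+d} (\<lambda>u. norm (e u))" unfolding e_def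
    by (intro continuous_intros continuous_on_subset[OF c1 I_sub] continuous_on_subset[OF c2 I_sub])
  obtain um where um: "um \<in> {s..s+d}" "\<forall>u\<in>{s..s+d}. norm (e u) \<le> norm (e um)"
    using continuous_attains_sup[OF compact_Icc _ ce] d0 by auto
  define m where "m = norm (e um)"
  have der: "(e has_vector_derivative (F (\<gamma>1 u) - F (\<gamma>2 u))) (at u within {s..s+d})"
    if "u \<in> {s..s+d}" for u
  proof -
    have u: "u \<in> {0..t}" using that I_sub by (rule subsetD[rotated])
    have "(\<gamma>1 has_vector_derivative F (\<gamma>1 u)) (at u within {s..s+d})"
    proof -
      have "(\<gamma>1 has_vector_derivative F (\<gamma>1 u)) (at u within {0..t})" using bspec[OF g1 u] by (rule conjunct2)
      then show ?thesis using I_sub by (rule has_vector_derivative_within_subset)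
    qed
    moreover have "(\<gamma>2 has_vector_derivative F (\<gamma>2 u)) (at u within {s..s+d})"
    proof -
      have "(\<gamma>2 has_vector_derivative F (\<gamma>2 u)) (at u within {0..t})" using bspec[OF g2 u] by (rule conjunct2)
      then show ?thesis using I_sub by (rule has_vector_derivative_within_subset)
    qed
    ultimately show ?thesis unfolding e_def by (rule has_vector_derivative_diff)
  qed
  have "norm (e u - e s) \<le> (L * m) * norm (u - s)" if "u \<in> {s..s+d}" for u
  proof (rule differentiable_bound[OF convex_real_interval(5) _ _ that])
    fix w assume w: "w \<in> {s..s+d}"
    show "(e has_derivative (\<lambda>h. h *\<^sub>R (F (\<gamma>1 w) - F (\<gamma>2 w)))) (at w within {s..s+d})"
      using der[OF w] by (simp add: has_vector_derivative_def)
    have "onorm (\<lambda>h. h *\<^sub>R (F (\<gamma>1 w) - F (\<gamma>2 w))) = norm (F (\<gamma>1 w) - F (\<gamma>2 w))"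
      using onorm_scaleR_left[OF bounded_linear_ident] by (simp add: onorm_id)
    also have "\<dots> \<le> L * norm (e w)" using rL(4) in1[OF w] in2[OF w] by (simp add: e_def)
    also have "\<dots> \<le> L * m" using um w rL(2) by (simp add: m_def mult_left_mono)
    finally show "onorm (\<lambda>h. h *\<^sub>R (F (\<gamma>1 w) - F (\<gamma>2 w))) \<le> L * m" .
  next
    show "s \<in> {s..s+d}" using d0 by simp
  qed
  then have "m \<le> (L * m) * norm (um - s)" using um eq by (simp add: m_def e_def)
  also have "\<dots> \<le> (L * m) * d" using um rL(2) by (intro mult_left_mono) (auto simp: m_def)
  also have "\<dots> \<le> m / 2"
  proof -
    have "L * d \<le> 1/2"
    proof -
      have "d \<le> 1 / (2 * (L + 1))" by (simp add: d_def)
      then have "L * d \<le> L * (1 / (2 * (L + 1)))" using rL(2) by (intro mult_left_mono) auto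
      also have "\<dots> \<le> 1/2" using rL(2) by (simp add: field_simps)
      finally show ?thesis .
    qed
    then show ?thesis using mult_right_mono[of "L*d" "1/2" m] by (simp add: m_def mult.commute mult.left_commute)
  qed
  finally have "m \<le> 0" by simp
  then have "\<forall>u\<in>{s..s+d}. e u = 0" using um by (simp add: m_def)
  then show ?thesis using d0 by (auto simp: e_def)
qed



lemma ode_unique:
  fixes F :: "'a::euclidean_space \<Rightarrow> 'a"
  assumes F: "loclip F X"
    and g1: "\<forall>s\<in>{0..t}. \<gamma>1 s \<in> X \<and> (\<gamma>1 has_vector_derivative F (\<gamma>1 s)) (at s within {0..t})"
    and g2: "\<forall>s\<in>{0..t}. \<gamma>2 s \<in> X \<and> (\<gamma>2 has_vector_derivative F (\<gamma>2 s)) (at s within {0..t})"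
    and eq0: "\<gamma>1 0 = \<gamma>2 0"
  shows "\<forall>s\<in>{0..t}. \<gamma>1 s = \<gamma>2 s"
proof -
  have c1: "continuous_on {0..t} \<gamma>1" using g1
    unfolding continuous_on_eq_continuous_within using has_vector_derivative_continuous by blast
  have c2: "continuous_on {0..t} \<gamma>2" using g2
    unfolding continuous_on_eq_continuous_within using has_vector_derivative_continuous by blast
  have "\<forall>s\<ge>0. s \<le> t \<longrightarrow> \<gamma>1 s = \<gamma>2 s"
  proof (rule cont_induct)
    show "0 \<le> t \<longrightarrow> \<gamma>1 0 = \<gamma>2 0" using eq0 by simp
  next
    fix s :: real assume s: "s > 0" and below: "\<forall>u\<in>{0..<s}. u \<le> t \<longrightarrow> \<gamma>1 u = \<gamma>2 u"
    show "s \<le> t \<longrightarrow> \<gamma>1 s = \<gamma>2 s"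
    proof
      assume st: "s \<le> t"
      have sub: "{0..s} \<subseteq> {0..t}" using st by simp
      have cc: "continuous_on (closure {0..<s}) (\<lambda>u. norm (\<gamma>1 u - \<gamma>2 u))"
        using s by (simp add: closure_atLeastLessThan)
          (intro continuous_intros continuous_on_subset[OF c1 sub] continuous_on_subset[OF c2 sub])
      have "s \<in> closure {0..<s}" using s by (simp add: closure_atLeastLessThan)
      then have "norm (\<gamma>1 s - \<gamma>2 s) \<le> 0"
      proof (rule continuous_le_on_closure[OF cc])
        fix u assume "u \<in> {0..<s}"
        then have "\<gamma>1 u = \<gamma>2 u" using below st by simp
        then show "norm (\<gamma>1 u - \<gamma>2 u) \<le> 0" by simp
      qed
      then show "\<gamma>1 s = \<gamma>2 s" by simp
    qed
  next
    fix s :: real assume s: "s \<ge> 0" and upto: "\<forall>u\<in>{0..s}. u \<le> t \<longrightarrow> \<gamma>1 u = \<gamma>2 u"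
    show "\<exists>d>0. \<forall>u\<in>{s..s+d}. u \<le> t \<longrightarrow> \<gamma>1 u = \<gamma>2 u"
    proof (cases "s < t")
      case True
      have "\<gamma>1 s = \<gamma>2 s" using upto s True by simp
      then obtain d where "d > 0" "\<forall>u\<in>{s..s+d}. \<gamma>1 u = \<gamma>2 u"
        using ode_unique_local[OF F g1 g2 s True] by blast
      then show ?thesis by blast
    next
      case False
      have "\<forall>u\<in>{s..s+1}. u \<le> t \<longrightarrow> \<gamma>1 u = \<gamma>2 u"
      proof (intro ballI impI)
        fix u assume "u \<in> {s..s+1}" "u \<le> t"
        then have "u = s" using False by simp
        then show "\<gamma>1 u = \<gamma>2 u" using upto s \<open>u \<le> t\<close> by simp
      qed
      then show ?thesis by (intro exI[of _ 1]) simp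
    qed
  qed
  then show ?thesis by simp
qed

lemma shift_deriv:
  assumes "\<forall>\<tau>\<ge>0. (\<gamma> has_vector_derivative G \<tau>) (at \<tau> within {0..})" "a \<ge> 0" "u \<ge> 0"
  shows "((\<lambda>u. \<gamma> (a + u)) has_vector_derivative G (a + u)) (at u within {0..})"
proof -
  have 1: "((\<lambda>u. a + u) has_vector_derivative 1) (at u within {0..})"
    by (auto intro!: derivative_eq_intros)
  have img: "(\<lambda>u. a + u) ` {0..} \<subseteq> {0..}" using assms(2) by auto
  have 2: "(\<gamma> has_vector_derivative G (a + u)) (at (a + u) within (\<lambda>u. a + u) ` {0..})"
  proof -
    have "(\<gamma> has_vector_derivative G (a + u)) (at (a + u) within {0..})"
      using assms by simp
    then show ?thesis using img by (rule has_vector_derivative_within_subset)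
  qed
  show ?thesis using vector_diff_chain_within[OF 1 2] by (simp add: o_def)
qed



lemma ode_exists:
  fixes F :: "'a::euclidean_space \<Rightarrow> 'a"
  assumes F: "loclip F X" and z: "z \<in> X"
  shows "\<exists>d>0. \<exists>\<psi>. \<psi> 0 = z \<and> (\<forall>s\<in>{0..d}. \<psi> s \<in> X \<and> (\<psi> has_vector_derivative F (\<psi> s)) (at s within {0..d}))"
proof -
  obtain r L where rL: "r > 0" "L \<ge> 0" "cball z r \<subseteq> X"
      "\<forall>x\<in>cball z r. \<forall>y\<in>cball z r. norm (F x - F y) \<le> L * norm (x - y)"
    using F z unfolding loclip_def by blast
  have cF: "continuous_on (cball z r) F"
    using F rL(3) unfolding loclip_def using continuous_on_subset by blast
  define M where "M = norm (F z) + L * r + 1"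
  have M0: "M > 0" using rL by (simp add: M_def add_nonneg_pos)
  have FM: "norm (F x) \<le> M" if x: "x \<in> cball z r" for x
  proof -
    have zc: "z \<in> cball z r" using rL by simp
    have "norm (F x) \<le> norm (F z) + norm (F x - F z)" by (rule norm_triangle_sub)
    also have "norm (F x - F z) \<le> L * norm (x - z)" using rL(4) x zc by blast
    also have "L * norm (x - z) \<le> L * r" using x rL(2) by (intro mult_left_mono) (auto simp: dist_norm norm_minus_commute)
    finally show ?thesis by (simp add: M_def)
  qed
  define d where "d = min (r / M) (1 / (2 * (L + 1)))"
  have d0: "d > 0" using rL M0 by (simp add: d_def)
  have dM: "M * d \<le> r"
  proof -
    have "d \<le> r / M" by (simp add: d_def)
    then show ?thesis using M0 by (simp add: field_simps)
  qed
  have Ld: "L * d \<le> 1/2"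
  proof -
    have "d \<le> 1 / (2 * (L + 1))" by (simp add: d_def)
    then have "L * d \<le> L * (1 / (2 * (L + 1)))" using rL(2) by (intro mult_left_mono) auto
    also have "\<dots> \<le> 1/2" using rL(2) by (simp add: field_simps)
    finally show ?thesis .
  qed
  define c where "c u = max 0 (min d u)" for u :: real
  have c_range: "c u \<in> {0..d}" for u using d0 by (auto simp: c_def)
  have c_id: "c u = u" if "u \<in> {0..d}" for u using that by (auto simp: c_def)
  have cc: "continuous_on UNIV c" unfolding c_def by (intro continuous_intros)
  define S :: "(real \<Rightarrow>\<^sub>C 'a) set" where "S = PiC UNIV (\<lambda>_. cball z r)"
  have memS: "\<gamma> \<in> S \<longleftrightarrow> (\<forall>u. apply_bcontfun \<gamma> u \<in> cball z r)" for \<gamma> :: "real \<Rightarrow>\<^sub>C 'a"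
    unfolding S_def mem_PiC_iff by auto
  define q where "q \<gamma> u = z + integral {0..c u} (\<lambda>v. F (apply_bcontfun \<gamma> v))" for \<gamma> :: "real \<Rightarrow>\<^sub>C 'a" and u
  have contFg: "continuous_on UNIV (\<lambda>v. F (apply_bcontfun \<gamma> v))" if "\<gamma> \<in> S" for \<gamma>
    by (rule continuous_on_compose2[OF cF continuous_on_apply_bcontfun]) (use that memS in auto)
  have ibound: "norm (integral {0..a} (\<lambda>v. F (apply_bcontfun \<gamma> v))) \<le> M * a"
    if "\<gamma> \<in> S" "a \<ge> 0" for \<gamma> a
  proof -
    have "norm (integral {0..a} (\<lambda>v. F (apply_bcontfun \<gamma> v))) \<le> M * (a - 0)"
    proof (rule integral_bound)
      show "0 \<le> a" using that by simp
      show "continuous_on {0..a} (\<lambda>v. F (apply_bcontfun \<gamma> v))"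
        using contFg[OF that(1)] by (rule continuous_on_subset) simp
      show "norm (F (apply_bcontfun \<gamma> v)) \<le> M" for v using that(1) memS FM by blast
    qed
    then show ?thesis by simp
  qed
  have qS: "q \<gamma> u \<in> cball z r" if "\<gamma> \<in> S" for \<gamma> u
  proof -
    have "norm (integral {0..c u} (\<lambda>v. F (apply_bcontfun \<gamma> v))) \<le> M * c u"
      using ibound[OF that] c_range by simp
    also have "M * c u \<le> M * d" using c_range M0 by (intro mult_left_mono) auto
    finally show ?thesis using dM by (simp add: q_def dist_norm)
  qed
  have qB: "q \<gamma> \<in> bcontfun" if "\<gamma> \<in> S" for \<gamma>
  proof (rule bcontfun_normI)
    have "continuous_on {0..d} (\<lambda>a. integral {0..a} (\<lambda>v. F (apply_bcontfun \<gamma> v)))"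
      unfolding continuous_on_eq_continuous_within
    proof
      fix a assume "a \<in> {0..d}"
      moreover have "continuous_on {0..d} (\<lambda>v. F (apply_bcontfun \<gamma> v))"
        by (rule continuous_on_subset[OF contFg[OF that]]) simp
      ultimately have "((\<lambda>a. integral {0..a} (\<lambda>v. F (apply_bcontfun \<gamma> v))) has_vector_derivative F (apply_bcontfun \<gamma> a)) (at a within {0..d})"
        using integral_has_vector_derivative by blast
      then show "continuous (at a within {0..d}) (\<lambda>a. integral {0..a} (\<lambda>v. F (apply_bcontfun \<gamma> v)))"
        by (rule has_vector_derivative_continuous)
    qed
    then have "continuous_on UNIV (\<lambda>u. integral {0..c u} (\<lambda>v. F (apply_bcontfun \<gamma> v)))"
      by (rule continuous_on_compose2[OF _ cc]) (use c_range in auto)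
    then show "continuous_on UNIV (q \<gamma>)" unfolding q_def by (intro continuous_intros)
  next
    fix u
    have "norm (q \<gamma> u) \<le> norm z + norm (q \<gamma> u - z)" by (rule norm_triangle_sub)
    also have "norm (q \<gamma> u - z) \<le> r" using qS[OF that, of u] by (simp add: dist_norm norm_minus_commute)
    finally show "norm (q \<gamma> u) \<le> norm z + r" by simp
  qed
  define Q where "Q \<gamma> = Bcontfun (q \<gamma>)" for \<gamma>
  have Qapp: "apply_bcontfun (Q \<gamma>) = q \<gamma>" if "\<gamma> \<in> S" for \<gamma>
    unfolding Q_def using qB[OF that] by (simp add: Bcontfun_inverse)
  have QS: "Q ` S \<subseteq> S"
  proof (rule image_subsetI)
    fix \<gamma> assume g: "\<gamma> \<in> S"
    show "Q \<gamma> \<in> S" unfolding memS Qapp[OF g] using qS[OF g] by simp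
  qed
  have contr: "dist (Q \<gamma>1) (Q \<gamma>2) \<le> 1/2 * dist \<gamma>1 \<gamma>2" if g: "\<gamma>1 \<in> S" "\<gamma>2 \<in> S" for \<gamma>1 \<gamma>2
  proof (rule dist_bound)
    fix u
    let ?f1 = "\<lambda>v. F (apply_bcontfun \<gamma>1 v)" and ?f2 = "\<lambda>v. F (apply_bcontfun \<gamma>2 v)"
    have i1: "?f1 integrable_on {0..c u}"
      by (rule integrable_continuous_real, rule continuous_on_subset[OF contFg[OF g(1)]]) simp
    have i2: "?f2 integrable_on {0..c u}"
      by (rule integrable_continuous_real, rule continuous_on_subset[OF contFg[OF g(2)]]) simp
    have "dist (Q \<gamma>1 u) (Q \<gamma>2 u) = norm (integral {0..c u} ?f1 - integral {0..c u} ?f2)"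
      using Qapp g by (simp add: q_def dist_norm)
    also have "\<dots> = norm (integral {0..c u} (\<lambda>v. ?f1 v - ?f2 v))" using integral_diff[OF i1 i2] by simp
    also have "\<dots> \<le> (L * dist \<gamma>1 \<gamma>2) * (c u - 0)"
    proof (rule integral_bound)
      show "0 \<le> c u" using c_range by simp
      show "continuous_on {0..c u} (\<lambda>v. ?f1 v - ?f2 v)"
        by (rule continuous_on_diff; rule continuous_on_subset[OF contFg]) (use g in auto)
      fix v
      have "norm (?f1 v - ?f2 v) \<le> L * norm (apply_bcontfun \<gamma>1 v - apply_bcontfun \<gamma>2 v)"
      proof -
        have "apply_bcontfun \<gamma>1 v \<in> cball z r" "apply_bcontfun \<gamma>2 v \<in> cball z r" using g memS by blast+
        then show ?thesis using rL(4) by blast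
      qed
      also have "\<dots> \<le> L * dist \<gamma>1 \<gamma>2" using dist_bounded[of \<gamma>1 v \<gamma>2] rL(2)
        by (intro mult_left_mono) (auto simp: dist_norm)
      finally show "norm (?f1 v - ?f2 v) \<le> L * dist \<gamma>1 \<gamma>2" .
    qed
    also have "\<dots> \<le> (L * d) * dist \<gamma>1 \<gamma>2"
    proof -
      have "c u * dist \<gamma>1 \<gamma>2 \<le> d * dist \<gamma>1 \<gamma>2"
        using c_range[of u] zero_le_dist[of \<gamma>1 \<gamma>2] by (intro mult_right_mono) auto
      then have "L * (c u * dist \<gamma>1 \<gamma>2) \<le> L * (d * dist \<gamma>1 \<gamma>2)"
        using rL(2) by (rule mult_left_mono)
      then show ?thesis by (simp add: ac_simps)
    qed
    also have "\<dots> \<le> 1/2 * dist \<gamma>1 \<gamma>2" using Ld by (intro mult_right_mono) auto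
    finally show "dist (Q \<gamma>1 u) (Q \<gamma>2 u) \<le> 1/2 * dist \<gamma>1 \<gamma>2" .
  qed
  have complS: "complete S" unfolding complete_eq_closed S_def by (rule closed_PiC) simp
  have neS: "S \<noteq> {}"
  proof -
    have "const_bcontfun z \<in> S" using memS rL(1) by simp
    then show ?thesis by blast
  qed
  obtain \<gamma> where \<gamma>: "\<gamma> \<in> S" "Q \<gamma> = \<gamma>"
    using Banach_fix[OF complS neS _ _ QS contr] by auto
  have fix_eq: "apply_bcontfun \<gamma> u = q \<gamma> u" for u using Qapp[OF \<gamma>(1)] \<gamma>(2) by simp
  define \<psi> where "\<psi> = apply_bcontfun \<gamma>"
  have "c 0 = 0" using d0 by (simp add: c_def)
  then have "\<psi> 0 = z" unfolding \<psi>_def fix_eq[of 0] q_def by simp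
  moreover have "\<forall>s\<in>{0..d}. \<psi> s \<in> X \<and> (\<psi> has_vector_derivative F (\<psi> s)) (at s within {0..d})"
  proof
    fix s assume s: "s \<in> {0..d}"
    have "\<psi> s \<in> X" using \<gamma>(1) memS rL(3) by (auto simp: \<psi>_def)
    moreover have "(\<psi> has_vector_derivative F (\<psi> s)) (at s within {0..d})"
    proof (rule has_vector_derivative_transform[OF s])
      show "\<psi> x = z + integral {0..x} (\<lambda>v. F (apply_bcontfun \<gamma> v))" if "x \<in> {0..d}" for x
        unfolding \<psi>_def fix_eq[of x] q_def c_id[OF that] ..
      have ih: "((\<lambda>a. integral {0..a} (\<lambda>v. F (apply_bcontfun \<gamma> v))) has_vector_derivative F (\<psi> s)) (at s within {0..d})"
        using integral_has_vector_derivative[OF continuous_on_subset[OF contFg[OF \<gamma>(1)]] s] by (simp add: \<psi>_def)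
      show "((\<lambda>x. z + integral {0..x} (\<lambda>v. F (apply_bcontfun \<gamma> v))) has_vector_derivative F (\<psi> s)) (at s within {0..d})"
        using has_vector_derivative_add[OF has_vector_derivative_const[of z] ih] by simp
    qed
    ultimately show "\<psi> s \<in> X \<and> (\<psi> has_vector_derivative F (\<psi> s)) (at s within {0..d})" by blast
  qed
  ultimately show ?thesis using d0 by blast
qed



theorem lemma3:
  fixes f :: "real^'n \<Rightarrow> real^'n" and g :: "real^'n \<Rightarrow> real^'m^'n"
    and X :: "(real^'n) set" and U :: "(real^'m) set"
    and h hb \<eta> :: "real^'n \<Rightarrow> real"
    and kb ke ks :: "real^'n \<Rightarrow> real^'m"
    and \<phi> :: "real \<Rightarrow> real^'n \<Rightarrow> real^'n"
    and T :: real and CS CB CI :: "(real^'n) set"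
  assumes X_open: "open X"
    and f_C1: "C1_on X f" and g_C1: "C1_on X g"
    and U_poly: "polytope U"
    and h_C1: "C1_on X h"
    and CS_def: "CS = {x\<in>X. h x \<ge> 0}"
    and hb_C1: "C1_on X hb"
    and CB_def: "CB = {x\<in>X. hb x \<ge> 0}"
    and hb_grad: "\<forall>x\<in>frontier CB. \<exists>D. (hb has_derivative D) (at x) \<and> D \<noteq> (\<lambda>_. 0)"
    and CB_CS: "CB \<subseteq> CS"
    and kb_backup: "backup_controller f g U X CB kb"
    and ke_C1: "C1_on X ke" and ke_U: "\<forall>x\<in>X. ke x \<in> U"
    and eta_C1: "C1_on X \<eta>" and eta_range: "\<forall>x\<in>X. \<eta> x \<in> {0..1}"
    and eta_CB: "\<forall>x\<in>CB. \<eta> x = 1"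
    and ks_def: "ks = (\<lambda>x. (1 - \<eta> x) *\<^sub>R ke x + \<eta> x *\<^sub>R kb x)"
    and flow_X: "\<forall>x\<in>X. \<forall>\<tau>\<ge>0. \<phi> \<tau> x \<in> X"
    and flow_init: "\<forall>x\<in>X. \<phi> 0 x = x"
    and flow_ode: "\<forall>x\<in>X. \<forall>\<tau>\<ge>0.
        ((\<lambda>t. \<phi> t x) has_vector_derivative (f (\<phi> \<tau> x) + g (\<phi> \<tau> x) *v ks (\<phi> \<tau> x))) (at \<tau> within {0..})"
    and T_pos: "T > 0"
    and CI_def: "CI = {x\<in>X. (\<forall>\<tau>\<in>{0..T}. h (\<phi> \<tau> x) \<ge> 0) \<and> hb (\<phi> T x) \<ge> 0}"
  shows "controlled_invariant f g U X CI
       \<and> forward_invariant (\<lambda>x. f x + g x *v ks x) X CI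
       \<and> (\<forall>x\<in>CI. \<forall>\<tau>\<ge>0. \<phi> \<tau> x \<in> CI)
       \<and> CI \<subseteq> CS"
proof -
  define Fs where "Fs = (\<lambda>x. f x + g x *v ks x)"
  define Fb where "Fb = (\<lambda>x. f x + g x *v kb x)"
  have kbC1: "C1_on X kb" and kbU: "\<forall>x\<in>X. kb x \<in> U"
    and kbinv: "forward_invariant Fb X CB"
    using kb_backup unfolding backup_controller_def Fb_def by auto
  have lf: "loclip f X" by (rule C1_loclip[OF X_open f_C1])
  have lg: "loclip g X" by (rule C1_loclip[OF X_open g_C1])
  have lke: "loclip ke X" by (rule C1_loclip[OF X_open ke_C1])
  have lkb: "loclip kb X" by (rule C1_loclip[OF X_open kbC1])
  have leta: "loclip \<eta> X" by (rule C1_loclip[OF X_open eta_C1])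
  have lhb: "loclip hb X" by (rule C1_loclip[OF X_open hb_C1])
  have "loclip (\<lambda>x. 1 + (-1) *\<^sub>R \<eta> x) X"
    by (rule loclip_add[OF loclip_const[OF X_open] loclip_bilin[OF bounded_bilinear_scaleR loclip_const[OF X_open] leta]])
  moreover have "(\<lambda>x. 1 + (-1) *\<^sub>R \<eta> x) = (\<lambda>x. 1 - \<eta> x)" by auto
  ultimately have l1eta: "loclip (\<lambda>x. 1 - \<eta> x) X" by simp
  have lks: "loclip ks X" unfolding ks_def
    by (rule loclip_add[OF loclip_bilin[OF bounded_bilinear_scaleR l1eta lke] loclip_bilin[OF bounded_bilinear_scaleR leta lkb]])
  have lFs: "loclip Fs X" unfolding Fs_def by (rule loclip_add[OF lf loclip_bilin[OF bb_mv lg lks]])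
  have lFb: "loclip Fb X" unfolding Fb_def by (rule loclip_add[OF lf loclip_bilin[OF bb_mv lg lkb]])
  have chb: "continuous_on X hb" using lhb loclip_def by blast
  have ode: "((\<lambda>t. \<phi> t x) has_vector_derivative Fs (\<phi> \<tau> x)) (at \<tau> within {0..})" if "x \<in> X" "\<tau> \<ge> 0" for x \<tau>
    using flow_ode that unfolding Fs_def by blast
  have phiX: "\<phi> \<tau> x \<in> X" if "x \<in> X" "\<tau> \<ge> 0" for x \<tau> using flow_X that by blast
  have sol: "\<forall>s\<in>{0..t}. (\<lambda>s. \<phi> (a + s) x) s \<in> X \<and> ((\<lambda>s. \<phi> (a + s) x) has_vector_derivative Fs ((\<lambda>s. \<phi> (a + s) x) s)) (at s within {0..t})"
    if x: "x \<in> X" and a: "a \<ge> 0" for x a t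
  proof
    fix s assume s: "s \<in> {0..t}"
    have "\<forall>\<tau>\<ge>0. ((\<lambda>t. \<phi> t x) has_vector_derivative Fs (\<phi> \<tau> x)) (at \<tau> within {0..})" using ode x by blast
    then have "((\<lambda>u. \<phi> (a + u) x) has_vector_derivative Fs (\<phi> (a + s) x)) (at s within {0..})"
      using shift_deriv[of "\<lambda>t. \<phi> t x" "\<lambda>\<tau>. Fs (\<phi> \<tau> x)" a s] a s by simp
    then have "((\<lambda>u. \<phi> (a + u) x) has_vector_derivative Fs (\<phi> (a + s) x)) (at s within {0..t})"
      by (rule has_vector_derivative_within_subset) auto
    moreover have "\<phi> (a + s) x \<in> X" using phiX x a s by simp
    ultimately show "(\<lambda>s. \<phi> (a + s) x) s \<in> X \<and> ((\<lambda>s. \<phi> (a + s) x) has_vector_derivative Fs ((\<lambda>s. \<phi> (a + s) x) s)) (at s within {0..t})"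
      by simp
  qed
  have semi: "\<phi> s (\<phi> a x) = \<phi> (a + s) x" if x: "x \<in> X" and a: "a \<ge> 0" and s: "s \<ge> 0" for x a s
  proof -
    have ax: "\<phi> a x \<in> X" using phiX x a by blast
    have "\<forall>u\<in>{0..s}. (\<lambda>u. \<phi> (0 + u) (\<phi> a x)) u = (\<lambda>u. \<phi> (a + u) x) u"
    proof (rule ode_unique[OF lFs sol[OF ax order_refl] sol[OF x a]])
      show "\<phi> (0 + 0) (\<phi> a x) = \<phi> (a + 0) x" using flow_init ax by simp
    qed
    then show ?thesis using s by simp
  qed
  have CB_inv: "\<forall>s\<ge>0. \<phi> s y \<in> CB" if y: "y \<in> CB" for y
  proof (rule cont_induct)
    have yX: "y \<in> X" using y CB_def by blast
    show "\<phi> 0 y \<in> CB" using flow_init yX y by simp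
  next
    fix s :: real assume s: "s > 0" and below: "\<forall>u\<in>{0..<s}. \<phi> u y \<in> CB"
    have yX: "y \<in> X" using y CB_def by blast
    have "\<forall>u\<in>{0..s}. (\<lambda>u. \<phi> (0 + u) y) u \<in> X \<and> ((\<lambda>u. \<phi> (0 + u) y) has_vector_derivative Fs ((\<lambda>u. \<phi> (0 + u) y) u)) (at u within {0..s})"
      by (rule sol[OF yX order_refl])
    then have cphi: "continuous_on {0..s} (\<lambda>u. \<phi> u y)"
      unfolding continuous_on_eq_continuous_within using has_vector_derivative_continuous by fastforce
    have chbphi: "continuous_on {0..s} (\<lambda>u. hb (\<phi> u y))"
      by (rule continuous_on_compose2[OF chb cphi]) (use phiX yX in auto)
    have sC: "s \<in> closure {0..<s}" using s by (simp add: closure_atLeastLessThan)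
    have cC: "continuous_on (closure {0..<s}) (\<lambda>u. hb (\<phi> u y))"
      using chbphi s by (simp add: closure_atLeastLessThan)
    have "hb (\<phi> s y) \<ge> 0"
    proof (rule continuous_ge_on_closure[OF cC sC])
      fix u assume "u \<in> {0..<s}"
      then show "hb (\<phi> u y) \<ge> 0" using below CB_def by blast
    qed
    moreover have "\<phi> s y \<in> X" using phiX yX s by simp
    ultimately show "\<phi> s y \<in> CB" using CB_def by blast
  next
    fix s :: real assume s: "s \<ge> 0" and upto: "\<forall>u\<in>{0..s}. \<phi> u y \<in> CB"
    have yX: "y \<in> X" using y CB_def by blast
    define z where "z = \<phi> s y"
    have zCB: "z \<in> CB" using upto s by (simp add: z_def)
    then have zX: "z \<in> X" using CB_def by blast
    obtain d \<psi> where d: "d > 0" and \<psi>0: "\<psi> 0 = z"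
      and \<psi>sol: "\<forall>u\<in>{0..d}. \<psi> u \<in> X \<and> (\<psi> has_vector_derivative Fb (\<psi> u)) (at u within {0..d})"
      using ode_exists[OF lFb zX] by blast
    have fi: "\<forall>x0\<in>CB. \<forall>t\<ge>0. \<forall>\<gamma>. \<gamma> 0 = x0 \<and>
        (\<forall>s\<in>{0..t}. \<gamma> s \<in> X \<and> (\<gamma> has_vector_derivative Fb (\<gamma> s)) (at s within {0..t}))
        \<longrightarrow> (\<forall>s\<in>{0..t}. \<gamma> s \<in> CB)" using kbinv unfolding forward_invariant_def .
    have d0: "0 \<le> d" using d by simp
    have \<psi>CB: "\<forall>u\<in>{0..d}. \<psi> u \<in> CB"
      using fi[rule_format, OF zCB d0, of \<psi>] \<psi>0 \<psi>sol by blast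
    have eqF: "Fs x = Fb x" if "x \<in> CB" for x
      using eta_CB that by (simp add: Fs_def Fb_def ks_def)
    have \<psi>sol2: "\<forall>u\<in>{0..d}. \<psi> u \<in> X \<and> (\<psi> has_vector_derivative Fs (\<psi> u)) (at u within {0..d})"
      using \<psi>sol \<psi>CB eqF by simp
    have "\<forall>u\<in>{0..d}. \<psi> u = (\<lambda>u. \<phi> (s + u) y) u"
    proof (rule ode_unique[OF lFs \<psi>sol2 sol[OF yX s]])
      show "\<psi> 0 = \<phi> (s + 0) y" using \<psi>0 z_def by simp
    qed
    then have "\<forall>u\<in>{s..s+d}. \<phi> u y \<in> CB"
    proof (intro ballI)
      fix u assume eq: "\<forall>u\<in>{0..d}. \<psi> u = \<phi> (s + u) y" and u: "u \<in> {s..s+d}"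
      then have "u - s \<in> {0..d}" by simp
      then have "\<psi> (u - s) = \<phi> (s + (u - s)) y" "\<psi> (u - s) \<in> CB" using eq \<psi>CB by blast+
      then have "\<phi> (s + (u - s)) y \<in> CB" by simp
      then show "\<phi> u y \<in> CB" by simp
    qed
    then show "\<exists>d>0. \<forall>u\<in>{s..s+d}. \<phi> u y \<in> CB" using d by blast
  qed
  have CI_X: "x \<in> X" if "x \<in> CI" for x using that CI_def by blast
  have CI_T: "\<phi> T x \<in> CB" if x: "x \<in> CI" for x
    using x phiX[OF CI_X[OF x]] T_pos unfolding CI_def CB_def by auto
  have CI_inv: "\<phi> \<tau> x \<in> CI" if x: "x \<in> CI" and \<tau>: "\<tau> \<ge> 0" for x \<tau>
  proof -
    have xX: "x \<in> X" by (rule CI_X[OF x])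
    have 1: "\<phi> \<tau> x \<in> X" using phiX xX \<tau> by blast
    have 2: "h (\<phi> \<sigma> (\<phi> \<tau> x)) \<ge> 0" if \<sigma>: "\<sigma> \<in> {0..T}" for \<sigma>
    proof -
      have e: "\<phi> \<sigma> (\<phi> \<tau> x) = \<phi> (\<tau> + \<sigma>) x" using semi xX \<tau> \<sigma> by simp
      show ?thesis
      proof (cases "\<tau> + \<sigma> \<le> T")
        case True
        then show ?thesis using e x \<tau> \<sigma> unfolding CI_def by auto
      next
        case False
        have "\<phi> (\<tau> + \<sigma> - T) (\<phi> T x) = \<phi> (T + (\<tau> + \<sigma> - T)) x"
          using semi[OF xX, of T "\<tau> + \<sigma> - T"] T_pos False by simp
        then have "\<phi> (\<tau> + \<sigma>) x = \<phi> (\<tau> + \<sigma> - T) (\<phi> T x)" by simp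
        moreover have "\<phi> (\<tau> + \<sigma> - T) (\<phi> T x) \<in> CB" using CB_inv[OF CI_T[OF x]] False by simp
        ultimately have "\<phi> (\<tau> + \<sigma>) x \<in> CS" using CB_CS by auto
        then show ?thesis using e CS_def by simp
      qed
    qed
    have 3: "hb (\<phi> T (\<phi> \<tau> x)) \<ge> 0"
    proof -
      have "\<phi> T (\<phi> \<tau> x) = \<phi> (\<tau> + T) x" using semi xX \<tau> T_pos by simp
      also have "\<dots> = \<phi> \<tau> (\<phi> T x)" using semi[OF xX, of T \<tau>] T_pos \<tau> by (simp add: add.commute)
      finally have "\<phi> T (\<phi> \<tau> x) \<in> CB" using CB_inv[OF CI_T[OF x]] \<tau> by simp
      then show ?thesis using CB_def by simp
    qed
    show ?thesis using 1 2 3 unfolding CI_def by blast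
  qed
  have CI_CS: "CI \<subseteq> CS"
  proof
    fix x assume x: "x \<in> CI"
    then have "h (\<phi> 0 x) \<ge> 0" using T_pos unfolding CI_def by auto
    then show "x \<in> CS" using x CI_X flow_init CS_def by auto
  qed
  have FI: "forward_invariant Fs X CI"
    unfolding forward_invariant_def
  proof (intro ballI allI impI)
    fix x0 t \<gamma> s
    assume x0: "x0 \<in> CI" and t: "t \<ge> 0"
      and g: "\<gamma> 0 = x0 \<and> (\<forall>s\<in>{0..t}. \<gamma> s \<in> X \<and> (\<gamma> has_vector_derivative Fs (\<gamma> s)) (at s within {0..t}))"
      and s: "s \<in> {0..t}"
    have x0X: "x0 \<in> X" by (rule CI_X[OF x0])
    have "\<forall>u\<in>{0..t}. \<gamma> u = (\<lambda>u. \<phi> (0 + u) x0) u"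
    proof (rule ode_unique[OF lFs _ sol[OF x0X order_refl]])
      show "\<forall>s\<in>{0..t}. \<gamma> s \<in> X \<and> (\<gamma> has_vector_derivative Fs (\<gamma> s)) (at s within {0..t})" using g by blast
      show "\<gamma> 0 = \<phi> (0 + 0) x0" using g flow_init x0X by simp
    qed
    then have "\<gamma> s = \<phi> s x0" using s by simp
    then show "\<gamma> s \<in> CI" using CI_inv[OF x0] s by simp
  qed
  have ksU: "\<forall>x\<in>X. ks x \<in> U"
  proof
    fix x assume x: "x \<in> X"
    have "(1 - \<eta> x) *\<^sub>R ke x + \<eta> x *\<^sub>R kb x \<in> U"
      by (rule convexD[OF polytope_imp_convex[OF U_poly]]) (use ke_U kbU eta_range x in auto)
    then show "ks x \<in> U" by (simp add: ks_def)
  qed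
  have CIctl: "controlled_invariant f g U X CI"
    unfolding controlled_invariant_def using ksU FI unfolding Fs_def by blast
  show ?thesis using CIctl FI CI_inv CI_CS unfolding Fs_def by blast
qed

end
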